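(* If $f$ is a harmonic polynomial, i.e. $f(z)=p(z)+\overline{q(z)}$ with $p,q$ polynomials in $z$, then $\operatorname{int}(f(S)\cup C(f,\infty))=\varnothing$.
   Context: Writing $f=u+iv$, $J_f=u_xv_y-u_yv_x$ and $S=\{z\in\mathbb{C}: J_f(z)=0\}$. $C(f,\infty)$ is the set of finite points $\zeta\in\mathbb{C}$ for which there is a sequence $(z_n)$ with $|z_n|\to\infty$ and $f(z_n)\to\zeta$. *)

theory Defs
  imports "HOL-Analysis.Analysis" "HOL-Computational_Algebra.Polynomial"
begin

definition u_x :: "(complex \<Rightarrow> complex) \<Rightarrow> complex \<Rightarrow> real" where
  "u_x f z = deriv (\<lambda>t::real. Re (f (z + of_real t))) 0"
definition u_y :: "(complex \<Rightarrow> complex) \<Rightarrow> complex \<Rightarrow> real" where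
  "u_y f z = deriv (\<lambda>t::real. Re (f (z + \<i> * of_real t))) 0"
definition v_x :: "(complex \<Rightarrow> complex) \<Rightarrow> complex \<Rightarrow> real" where
  "v_x f z = deriv (\<lambda>t::real. Im (f (z + of_real t))) 0"
definition v_y :: "(complex \<Rightarrow> complex) \<Rightarrow> complex \<Rightarrow> real" where
  "v_y f z = deriv (\<lambda>t::real. Im (f (z + \<i> * of_real t))) 0"

definition jacobian_det :: "(complex \<Rightarrow> complex) \<Rightarrow> complex \<Rightarrow> real" where
  "jacobian_det f z = u_x f z * v_y f z - u_y f z * v_x f z"

definition crit_set :: "(complex \<Rightarrow> complex) \<Rightarrow> complex set" where
  "crit_set f = {z. jacobian_det f z = 0}"

definition cluster_set_inf :: "(complex \<Rightarrow> complex) \<Rightarrow> complex set" where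
  "cluster_set_inf f = {\<zeta>. \<exists>zs :: nat \<Rightarrow> complex.
      filterlim (\<lambda>n. norm (zs n)) at_top sequentially \<and> (\<lambda>n. f (zs n)) \<longlonglongrightarrow> \<zeta>}"

end

theory Submission
  imports Defs
begin

definition toC :: "real^2 \<Rightarrow> complex" where "toC v = Complex (v$1) (v$2)"
definition toR :: "complex \<Rightarrow> real^2" where "toR z = (\<chi> i. if i = 1 then Re z else Im z)"

lemma toC_toR[simp]: "toC (toR z) = z"
  by (simp add: toC_def toR_def complex_eq_iff)
lemma linear_toC: "linear toC"
  by (auto simp: toC_def linear_iff complex_eq_iff)
lemma linear_toR: "linear toR"
  by (auto simp: toR_def linear_iff vec_eq_iff)
lemma toR_eq0: "toR z = 0 \<longleftrightarrow> z = 0"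
  apply (auto simp: toR_def vec_eq_iff complex_eq_iff)
  by (metis (full_types) exhaust_2 one_neq_zero)

definition LL :: "complex poly \<Rightarrow> complex poly \<Rightarrow> complex \<Rightarrow> complex \<Rightarrow> complex" where
  "LL p q z h = poly (pderiv p) z * h + cnj (poly (pderiv q) z * h)"

lemma f_deriv:
  assumes f: "\<And>z. f z = poly p z + cnj (poly q z)"
  shows "(f has_derivative LL p q z) (at z)"
proof -
  have e: "f = (\<lambda>z. poly p z + cnj (poly q z))" using f by auto
  have 1: "(poly p has_derivative (\<lambda>h. poly (pderiv p) z * h)) (at z)"
    using poly_DERIV[of p z] by (simp add: has_field_derivative_def)
  have 2: "(poly q has_derivative (\<lambda>h. poly (pderiv q) z * h)) (at z)"
    using poly_DERIV[of q z] by (simp add: has_field_derivative_def)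
  have 3: "((\<lambda>z. cnj (poly q z)) has_derivative (\<lambda>h. cnj (poly (pderiv q) z * h))) (at z)"
    using bounded_linear.has_derivative[OF bounded_linear_cnj 2] .
  show ?thesis unfolding e LL_def[abs_def]
    using has_derivative_add[OF 1 3] by simp
qed

lemma LL_real: "LL p q z (of_real t * d) = of_real t * LL p q z d"
  by (simp add: LL_def algebra_simps)

lemma LL_real2: "LL p q z (d * of_real t) = of_real t * LL p q z d"
  by (simp add: LL_def algebra_simps)

lemma dir_deriv:
  assumes f: "\<And>z. f z = poly p z + cnj (poly q z)"
  shows "((\<lambda>t::real. Re (f (z + d * of_real t))) has_real_derivative Re (LL p q z d)) (at 0)"
    and "((\<lambda>t::real. Im (f (z + d * of_real t))) has_real_derivative Im (LL p q z d)) (at 0)"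
proof -
  have g: "((\<lambda>t::real. z + d * of_real t) has_derivative (\<lambda>t. d * of_real t)) (at 0)"
    by (auto intro!: derivative_eq_intros)
  have h: "((\<lambda>t::real. f (z + d * of_real t)) has_derivative (\<lambda>t. of_real t * LL p q z d)) (at 0)"
    using has_derivative_compose[OF g, of f "LL p q z"] f_deriv[OF f, of z]
    by (simp add: LL_real2)
  show "((\<lambda>t::real. Re (f (z + d * of_real t))) has_real_derivative Re (LL p q z d)) (at 0)"
    using bounded_linear.has_derivative[OF bounded_linear_Re h]
    by (simp add: has_field_derivative_def mult_commute_abs)
  show "((\<lambda>t::real. Im (f (z + d * of_real t))) has_real_derivative Im (LL p q z d)) (at 0)"
    using bounded_linear.has_derivative[OF bounded_linear_Im h]
    by (simp add: has_field_derivative_def mult_commute_abs)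
qed

lemma jac_eq:
  assumes f: "\<And>z. f z = poly p z + cnj (poly q z)"
  shows "jacobian_det f z = Re (LL p q z 1) * Im (LL p q z \<i>) - Re (LL p q z \<i>) * Im (LL p q z 1)"
proof -
  have "u_x f z = Re (LL p q z 1)" unfolding u_x_def
    using DERIV_imp_deriv[OF dir_deriv(1)[OF f, of z 1]] by simp
  moreover have "v_x f z = Im (LL p q z 1)" unfolding v_x_def
    using DERIV_imp_deriv[OF dir_deriv(2)[OF f, of z 1]] by simp
  moreover have "u_y f z = Re (LL p q z \<i>)" unfolding u_y_def
    using DERIV_imp_deriv[OF dir_deriv(1)[OF f, of z \<i>]] by simp
  moreover have "v_y f z = Im (LL p q z \<i>)" unfolding v_y_def
    using DERIV_imp_deriv[OF dir_deriv(2)[OF f, of z \<i>]] by simp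
  ultimately show ?thesis by (simp add: jacobian_det_def)
qed

lemma LL_lin: "LL p q z (Complex x y) = of_real x * LL p q z 1 + of_real y * LL p q z \<i>"
proof -
  have "Complex x y = of_real x * 1 + of_real y * \<i>" by (simp add: complex_eq_iff)
  then show ?thesis by (simp add: LL_def algebra_simps)
qed

lemma kernel:
  fixes a b :: complex
  assumes "Re a * Im b - Re b * Im a = 0"
  shows "\<exists>x y. (x \<noteq> 0 \<or> y \<noteq> 0) \<and> of_real x * a + of_real y * b = 0"
proof (cases "Re b \<noteq> 0 \<or> Re a \<noteq> 0")
  case True
  then show ?thesis
    by (rule_tac x="Re b" in exI, rule_tac x="- Re a" in exI) (use assms in \<open>auto simp: complex_eq_iff algebra_simps\<close>)
next
  case F: False
  show ?thesis
  proof (cases "Im b \<noteq> 0 \<or> Im a \<noteq> 0")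
    case True
    then show ?thesis
      by (rule_tac x="Im b" in exI, rule_tac x="- Im a" in exI) (use assms F in \<open>auto simp: complex_eq_iff algebra_simps\<close>)
  next
    case False
    then show ?thesis using F
      by (rule_tac x=1 in exI, rule_tac x=0 in exI) (auto simp: complex_eq_iff)
  qed
qed

lemma crit_negligible:
  assumes f: "\<And>z. f z = poly p z + cnj (poly q z)"
  shows "negligible (f ` crit_set f)"
proof -
  define g where "g = toR \<circ> f \<circ> toC"
  define g' where "g' = (\<lambda>x. toR \<circ> LL p q (toC x) \<circ> toC)"
  have lin: "linear (LL p q z)" for z
    using has_derivative_linear[OF f_deriv[OF f]] .
  have "negligible (g ` (toR ` crit_set f))"
  proof (rule baby_Sard[where f' = g'])
    fix x assume "x \<in> toR ` crit_set f"
    have "(g has_derivative g' x) (at x)"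
      unfolding g_def g'_def
      apply (rule diff_chain_at)
       apply (rule linear_imp_has_derivative[OF linear_toC])
      apply (rule diff_chain_at)
       apply (rule f_deriv[OF f])
      apply (rule linear_imp_has_derivative[OF linear_toR])
      done
    then show "(g has_derivative g' x) (at x within toR ` crit_set f)"
      by (rule has_derivative_at_withinI)
  next
    fix x assume x: "x \<in> toR ` crit_set f"
    then obtain z where z: "x = toR z" "jacobian_det f z = 0" by (auto simp: crit_set_def)
    have lg: "linear (g' x)" unfolding g'_def
      by (intro linear_compose linear_toC linear_toR lin)
    obtain a b where ab: "a \<noteq> 0 \<or> b \<noteq> 0" "of_real a * LL p q z 1 + of_real b * LL p q z \<i> = 0"
      using kernel[of "LL p q z 1" "LL p q z \<i>"] z jac_eq[OF f, of z] by auto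
    have "g' x (toR (Complex a b)) = 0"
      using ab z by (simp add: g'_def LL_lin linear_0[OF linear_toR])
    moreover have "toR (Complex a b) \<noteq> 0" using ab by (simp add: toR_eq0 complex_eq_iff)
    ultimately have "\<not> inj (g' x)"
      using linear_0[OF lg] by (metis injD)
    then show "rank (matrix (g' x)) < CARD(2)"
    proof -
      have lg': "Vector_Spaces.linear (*s) (*s) (g' x)" using lg by (simp add: linear_matrix_vector_mul_eq)
      have "(*v) (matrix (g' x)) = g' x" using matrix_works[OF lg'] by (simp add: fun_eq_iff)
      then show ?thesis using \<open>\<not> inj (g' x)\<close> using less_rank_noninjective[of "matrix (g' x)"] by simp
    qed
  qed simp
  then have "negligible (toC ` (g ` (toR ` crit_set f)))"
    by (rule negligible_differentiable_image_negligible[rotated])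
       (auto intro: linear_imp_differentiable_on linear_toC)
  moreover have "toC ` (g ` (toR ` crit_set f)) = f ` crit_set f"
    by (auto simp: g_def image_image)
  ultimately show ?thesis by simp
qed

definition ev :: "real poly poly \<Rightarrow> complex \<Rightarrow> real" where
  "ev P z = poly (poly P [:Im z:]) (Re z)"

definition bnd :: "nat \<Rightarrow> real poly poly \<Rightarrow> bool" where
  "bnd m P \<longleftrightarrow> degree P \<le> m \<and> (\<forall>b. degree (coeff P b) \<le> m)"

definition PX :: "real poly poly" where "PX = [:[:0,1:]:]"
definition PY :: "real poly poly" where "PY = [:0,1:]"
definition PC :: "real \<Rightarrow> real poly poly" where "PC c = [:[:c:]:]"

lemma ev_simps[simp]:
  "ev (P + Q) z = ev P z + ev Q z"
  "ev (P - Q) z = ev P z - ev Q z"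
  "ev (P * Q) z = ev P z * ev Q z"
  "ev (P ^ k) z = ev P z ^ k"
  "ev (smult [:c:] P) z = c * ev P z"
  "ev (sum F A) z = (\<Sum>a\<in>A. ev (F a) z)"
  "ev PX z = Re z" "ev PY z = Im z" "ev (PC c) z = c" "ev 0 z = 0"
  by (simp_all add: ev_def PX_def PY_def PC_def poly_sum)

lemma bnd_mono: "bnd m P \<Longrightarrow> m \<le> m' \<Longrightarrow> bnd m' P"
  unfolding bnd_def by (meson order_trans)

lemma bnd_0[simp]: "bnd m 0" by (simp add: bnd_def)
lemma bnd_PC[simp]: "bnd m (PC c)" by (simp add: bnd_def PC_def coeff_pCons split: nat.split)
lemma bnd_PX[simp]: "bnd 1 PX" by (simp add: bnd_def PX_def coeff_pCons split: nat.split)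
lemma bnd_PY[simp]: "bnd 1 PY" by (simp add: bnd_def PY_def coeff_pCons split: nat.split)

lemma bnd_add: "bnd m P \<Longrightarrow> bnd m Q \<Longrightarrow> bnd m (P + Q)"
  unfolding bnd_def by (metis coeff_add degree_add_le)
lemma bnd_diff: "bnd m P \<Longrightarrow> bnd m Q \<Longrightarrow> bnd m (P - Q)"
  unfolding bnd_def by (metis coeff_diff degree_diff_le)
lemma bnd_smult: "bnd m P \<Longrightarrow> bnd m (smult [:c:] P)"
  unfolding bnd_def
  by (metis (no_types, lifting) coeff_smult degree_smult_le order_trans add_0 degree_mult_le degree_pCons_0)

lemma bnd_mult:
  assumes "bnd m P" "bnd m' Q" shows "bnd (m + m') (P * Q)"
  unfolding bnd_def
proof
  show "degree (P * Q) \<le> m + m'"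
    using assms unfolding bnd_def by (meson add_mono degree_mult_le order_trans)
  show "\<forall>b. degree (coeff (P * Q) b) \<le> m + m'"
  proof
    fix b
    show "degree (coeff (P * Q) b) \<le> m + m'"
      unfolding coeff_mult
      apply (rule degree_sum_le, simp)
      using assms unfolding bnd_def by (meson add_mono degree_mult_le order_trans)
  qed
qed

lemma bnd_PX_mult: "bnd m P \<Longrightarrow> bnd (Suc m) (PX * P)"
  using bnd_mult[OF bnd_PX] by simp
lemma bnd_PY_mult: "bnd m P \<Longrightarrow> bnd (Suc m) (PY * P)"
  using bnd_mult[OF bnd_PY] by simp

lemma bnd_pow: "bnd m P \<Longrightarrow> bnd (m * k) (P ^ k)"
proof (induction k)
  case 0 then show ?case by (simp add: bnd_def coeff_pCons split: nat.split)
next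
  case (Suc k) then show ?case using bnd_mult[of m P "m*k" "P^k"] by (simp add: add.commute)
qed

lemma bnd_sum: "finite A \<Longrightarrow> (\<And>a. a \<in> A \<Longrightarrow> bnd m (F a)) \<Longrightarrow> bnd m (sum F A)"
  by (induction A rule: finite_induct) (auto intro: bnd_add)

lemma lift_cpoly:
  fixes p :: "complex poly"
  shows "\<exists>R I. bnd (degree p) R \<and> bnd (degree p) I \<and> (\<forall>z. ev R z = Re (poly p z) \<and> ev I z = Im (poly p z))"
proof (induction p rule: pCons_induct)
  case 0
  then show ?case by (rule_tac x=0 in exI, rule_tac x=0 in exI) simp
next
  case (pCons a p)
  then obtain R I where RI: "bnd (degree p) R" "bnd (degree p) I"
    "\<And>z. ev R z = Re (poly p z)" "\<And>z. ev I z = Im (poly p z)" by blast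
  show ?case
  proof (cases "p = 0")
    case True
    then show ?thesis by (rule_tac x="PC (Re a)" in exI, rule_tac x="PC (Im a)" in exI) simp
  next
    case False
    then have d: "degree (pCons a p) = 1 + degree p" by simp
    show ?thesis
      apply (rule_tac x="PC (Re a) + PX * R - PY * I" in exI)
      apply (rule_tac x="PC (Im a) + PX * I + PY * R" in exI)
      unfolding d using RI
      by (auto intro!: bnd_add bnd_diff bnd_PX_mult bnd_PY_mult)
  qed
qed
lemma homog_system:
  fixes M :: "'e \<Rightarrow> 'i \<Rightarrow> real"
  assumes "finite E" "finite I" "card E < card I"
  shows "\<exists>c. (\<exists>i\<in>I. c i \<noteq> 0) \<and> (\<forall>e\<in>E. (\<Sum>i\<in>I. M e i * c i) = 0)"
  using assms
proof (induction E arbitrary: I M rule: finite_induct)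
  case empty
  then obtain i where "i \<in> I" by fastforce
  then show ?case by (rule_tac x="\<lambda>j. 1" in exI) auto
next
  case (insert e E)
  show ?case
  proof (cases "\<forall>i\<in>I. M e i = 0")
    case True
    have "card E < card I" using insert by simp
    then obtain c where c: "\<exists>i\<in>I. c i \<noteq> 0" "\<forall>e\<in>E. (\<Sum>i\<in>I. M e i * c i) = 0"
      using insert.IH[of I M] insert.prems by blast
    then show ?thesis using True by (rule_tac x=c in exI) auto
  next
    case False
    then obtain i0 where i0: "i0 \<in> I" "M e i0 \<noteq> 0" by blast
    define I' where "I' = I - {i0}"
    define M' where "M' = (\<lambda>e' i. M e' i - M e' i0 * M e i / M e i0)"
    have "card I' = card I - 1" using i0 insert.prems by (simp add: I'_def)
    then have "card E < card I'" using insert by simp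
    then obtain c' where c': "\<exists>i\<in>I'. c' i \<noteq> 0" "\<forall>e'\<in>E. (\<Sum>i\<in>I'. M' e' i * c' i) = 0"
      using insert.IH[of I' M'] insert.prems by (auto simp: I'_def)
    define c where "c = (\<lambda>i. if i = i0 then - (\<Sum>j\<in>I'. M e j * c' j) / M e i0 else c' i)"
    have split: "(\<Sum>i\<in>I. h i) = h i0 + (\<Sum>i\<in>I'. h i)" for h :: "'i \<Rightarrow> real"
      using i0 insert.prems by (simp add: I'_def sum.remove)
    have cI': "(\<Sum>i\<in>I'. h i * c i) = (\<Sum>i\<in>I'. h i * c' i)" for h
      by (rule sum.cong) (auto simp: c_def I'_def)
    have "(\<Sum>i\<in>I. M e i * c i) = 0"
      unfolding split cI' using i0 by (simp add: c_def)
    moreover have "(\<Sum>i\<in>I. M e' i * c i) = 0" if "e' \<in> E" for e'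
    proof -
      have "(\<Sum>i\<in>I. M e' i * c i) = M e' i0 * c i0 + (\<Sum>i\<in>I'. M e' i * c' i)"
        unfolding split cI' ..
      also have "\<dots> = (\<Sum>i\<in>I'. M' e' i * c' i)"
        using i0 by (simp add: c_def M'_def sum_subtractf sum_distrib_left sum_divide_distrib
            left_diff_distrib algebra_simps)
      also have "\<dots> = 0" using c' that by blast
      finally show ?thesis .
    qed
    moreover have "\<exists>i\<in>I. c i \<noteq> 0" using c' by (auto simp: c_def I'_def)
    ultimately show ?thesis by (rule_tac x=c in exI) auto
  qed
qed

lemma card_ineq: "((2*(n::nat)+1)*(2*n+1)^2 + 1)^2 < ((2*n+1)^2 + 1)^3"
proof -
  define s where "s = 2*n+1"
  have s1: "1 \<le> s" by (simp add: s_def)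
  have "s^3 \<le> s^4" using s1 by (simp add: power_increasing)
  moreover have "0 < s^2" using s1 by simp
  moreover have "(s * s^2 + 1)^2 = s^6 + 2 * s^3 + 1" by (simp add: power2_eq_square algebra_simps power_add[symmetric] eval_nat_numeral)
  moreover have "(s^2 + 1)^3 = s^6 + 3 * s^4 + 3 * s^2 + 1" by (simp add: power2_eq_square algebra_simps power_add[symmetric] eval_nat_numeral)
  ultimately show ?thesis unfolding s_def[symmetric] by linarith
qed

lemma dependency:
  assumes U: "bnd n PU" and V: "bnd n PV" and T: "bnd 1 PT"
  shows "\<exists>D c. (\<exists>i\<le>D. \<exists>j\<le>D. \<exists>k\<le>D. c i j k \<noteq> 0) \<and>
     (\<forall>z. (\<Sum>i\<le>D. \<Sum>j\<le>D. \<Sum>k\<le>D. c i j k * (ev PU z ^ i * ev PV z ^ j * ev PT z ^ k)) = 0)"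
proof -
  define D where "D = (2*n+1)^2"
  define Mb where "Mb = (2*n+1) * D"
  define I where "I = {..D} \<times> {..D} \<times> {..D}"
  define E where "E = {..Mb} \<times> {..Mb}"
  define G where "G = (\<lambda>(i,j,k). PU ^ i * PV ^ j * PT ^ k)"
  have bG: "bnd Mb (G t)" if "t \<in> I" for t
  proof -
    obtain i j k where t: "t = (i,j,k)" "i \<le> D" "j \<le> D" "k \<le> D" using \<open>t \<in> I\<close> by (auto simp: I_def)
    have "bnd (n*i + n*j + 1*k) (G t)" unfolding t G_def
      using bnd_pow[OF T, of k] by (auto intro!: bnd_mult bnd_pow U V)
    moreover have "n*i + n*j + 1*k \<le> Mb"
    proof -
      have a: "n*i \<le> n*D" "n*j \<le> n*D" using t by simp_all
      have "Mb = n*D + n*D + D" by (simp add: Mb_def algebra_simps)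
      then show ?thesis using a t(4) by linarith
    qed
    ultimately show ?thesis by (rule bnd_mono)
  qed
  have "card E < card I"
    unfolding E_def I_def Mb_def D_def using card_ineq[of n]
    by (simp add: card_cartesian_product power2_eq_square eval_nat_numeral)
  then obtain c0 where c0: "\<exists>t\<in>I. c0 t \<noteq> 0"
    "\<forall>e\<in>E. (\<Sum>t\<in>I. (\<lambda>(a,b) t. coeff (coeff (G t) b) a) e t * c0 t) = 0"
    using homog_system[of E I "\<lambda>(a,b) t. coeff (coeff (G t) b) a"]
    by (auto simp: E_def I_def)
  define H where "H = (\<Sum>t\<in>I. smult [:c0 t:] (G t))"
  have "H = 0"
  proof (rule poly_eqI, rule poly_eqI)
    fix b a
    have cc: "coeff (coeff H b) a = (\<Sum>t\<in>I. c0 t * coeff (coeff (G t) b) a)"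
      by (simp add: H_def coeff_sum)
    show "coeff (coeff H b) a = coeff (coeff 0 b) a"
    proof (cases "a \<le> Mb \<and> b \<le> Mb")
      case True
      then have "(a,b) \<in> E" by (simp add: E_def)
      then have "(\<Sum>t\<in>I. coeff (coeff (G t) b) a * c0 t) = 0" using c0(2) by fastforce
      then show ?thesis unfolding cc by (simp add: mult.commute)
    next
      case False
      have "coeff (coeff (G t) b) a = 0" if "t \<in> I" for t
      proof (cases "b \<le> Mb")
        case True
        then have "a > Mb" using False by simp
        moreover have "degree (coeff (G t) b) \<le> Mb" using bG[OF that] by (simp add: bnd_def)
        ultimately show ?thesis by (simp add: coeff_eq_0)
      next
        case False
        moreover have "degree (G t) \<le> Mb" using bG[OF that] by (simp add: bnd_def)
        ultimately show ?thesis by (simp add: coeff_eq_0)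
      qed
      then show ?thesis unfolding cc by simp
    qed
  qed
  have "(\<Sum>i\<le>D. \<Sum>j\<le>D. \<Sum>k\<le>D. c0 (i,j,k) * (ev PU z ^ i * ev PV z ^ j * ev PT z ^ k)) = 0" for z
  proof -
    have "0 = ev H z" using \<open>H = 0\<close> by simp
    also have "\<dots> = (\<Sum>t\<in>I. c0 t * ev (G t) z)" by (simp add: H_def)
    also have "\<dots> = (\<Sum>i\<le>D. \<Sum>j\<le>D. \<Sum>k\<le>D. c0 (i,j,k) * (ev PU z ^ i * ev PV z ^ j * ev PT z ^ k))"
      by (simp add: I_def G_def sum.cartesian_product split_def)
    finally show ?thesis by simp
  qed
  moreover have "\<exists>i\<le>D. \<exists>j\<le>D. \<exists>k\<le>D. c0 (i,j,k) \<noteq> 0" using c0(1) by (auto simp: I_def)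
  ultimately show ?thesis by (rule_tac x=D in exI, rule_tac x="\<lambda>i j k. c0 (i,j,k)" in exI) auto
qed

lemma sum_pow_zero:
  fixes a :: "nat \<Rightarrow> real"
  assumes "infinite A" "\<forall>x\<in>A. (\<Sum>i\<le>D. a i * x ^ i) = 0"
  shows "\<forall>i\<le>D. a i = 0"
proof -
  define P where "P = (\<Sum>i\<le>D. monom (a i) i)"
  have ev: "poly P x = (\<Sum>i\<le>D. a i * x ^ i)" for x
    by (simp add: P_def poly_sum poly_monom)
  have "P = 0"
  proof (rule ccontr)
    assume "P \<noteq> 0"
    then have "finite {x. poly P x = 0}" by (rule poly_roots_finite)
    moreover have "A \<subseteq> {x. poly P x = 0}" using assms(2) ev by auto
    ultimately show False using assms(1) finite_subset by blast
  qed
  moreover have "coeff P i = a i" if "i \<le> D" for i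
    using that by (simp add: P_def coeff_sum coeff_monom)
  ultimately show ?thesis by auto
qed

lemma two_var_zero:
  fixes c :: "nat \<Rightarrow> nat \<Rightarrow> real"
  assumes r: "r > 0" and z: "\<forall>w\<in>ball ctr r. (\<Sum>i\<le>D. \<Sum>j\<le>D. c i j * Re w ^ i * Im w ^ j) = 0"
  shows "\<forall>i\<le>D. \<forall>j\<le>D. c i j = 0"
proof -
  define X where "X = {Re ctr - r/2 <..< Re ctr + r/2}"
  define Y where "Y = {Im ctr - r/2 <..< Im ctr + r/2}"
  have inf: "infinite X" "infinite Y" using r by (simp_all add: X_def Y_def)
  have inb: "Complex x y \<in> ball ctr r" if "x \<in> X" "y \<in> Y" for x y
  proof -
    have "ctr - Complex x y = Complex (Re ctr - x) (Im ctr - y)" by (simp add: complex_eq_iff)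
    then have "dist ctr (Complex x y) = cmod (Complex (Re ctr - x) (Im ctr - y))"
      by (simp add: dist_norm)
    also have "\<dots> \<le> \<bar>Re ctr - x\<bar> + \<bar>Im ctr - y\<bar>" using cmod_le[of "Complex (Re ctr - x) (Im ctr - y)"] by simp
    also have "\<dots> < r" using that by (auto simp: X_def Y_def abs_if)
    finally show ?thesis by simp
  qed
  have "\<forall>i\<le>D. (\<Sum>j\<le>D. c i j * y ^ j) = 0" if y: "y \<in> Y" for y
  proof (rule sum_pow_zero[OF inf(1)], intro ballI)
    fix x assume x: "x \<in> X"
    have "(\<Sum>i\<le>D. (\<Sum>j\<le>D. c i j * y ^ j) * x ^ i) = (\<Sum>i\<le>D. \<Sum>j\<le>D. c i j * Re (Complex x y) ^ i * Im (Complex x y) ^ j)"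
      by (simp add: sum_distrib_right sum_distrib_left algebra_simps)
    also have "\<dots> = 0" using z inb[OF x y] by blast
    finally show "(\<Sum>i\<le>D. (\<Sum>j\<le>D. c i j * y ^ j) * x ^ i) = 0" .
  qed
  then have "\<forall>j\<le>D. c i j = 0" if "i \<le> D" for i
    using sum_pow_zero[OF inf(2), of "c i" D] that by auto
  then show ?thesis by auto
qed

lemma cauchy_bound:
  fixes a :: "nat \<Rightarrow> real"
  assumes eq: "(\<Sum>k\<le>K. a k * x ^ k) = 0" and aK: "a K \<noteq> 0"
  shows "\<bar>x\<bar> \<le> 1 + (\<Sum>k<K. \<bar>a k\<bar>) / \<bar>a K\<bar>"
proof (cases K)
  case 0
  then show ?thesis using eq aK by simp
next
  case (Suc K')
  have S0: "0 \<le> (\<Sum>k<K. \<bar>a k\<bar>) / \<bar>a K\<bar>" by (simp add: sum_nonneg)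
  show ?thesis
  proof (cases "\<bar>x\<bar> \<le> 1")
    case True then show ?thesis using S0 by linarith
  next
    case False
    have "a K * x ^ K = - (\<Sum>k<K. a k * x ^ k)"
      using eq by (simp add: lessThan_Suc_atMost[symmetric] Suc)
    then have "\<bar>a K\<bar> * \<bar>x\<bar> ^ K = \<bar>\<Sum>k<K. a k * x ^ k\<bar>"
      by (metis abs_minus_cancel abs_mult power_abs)
    also have "\<dots> \<le> (\<Sum>k<K. \<bar>a k\<bar> * \<bar>x\<bar> ^ k)"
      by (rule order_trans[OF sum_abs]) (simp add: abs_mult power_abs)
    also have "\<dots> \<le> (\<Sum>k<K. \<bar>a k\<bar> * \<bar>x\<bar> ^ K')"
      apply (rule sum_mono) apply (rule mult_left_mono)
      using False Suc by (auto intro!: power_increasing)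
    also have "\<dots> = (\<Sum>k<K. \<bar>a k\<bar>) * \<bar>x\<bar> ^ K'"
      by (simp add: sum_distrib_right)
    finally have "\<bar>a K\<bar> * \<bar>x\<bar> * \<bar>x\<bar> ^ K' \<le> (\<Sum>k<K. \<bar>a k\<bar>) * \<bar>x\<bar> ^ K'"
      unfolding Suc by (simp add: algebra_simps)
    then have "\<bar>a K\<bar> * \<bar>x\<bar> \<le> (\<Sum>k<K. \<bar>a k\<bar>)"
      using False by (simp add: mult_le_cancel_right)
    then have "\<bar>x\<bar> \<le> (\<Sum>k<K. \<bar>a k\<bar>) / \<bar>a K\<bar>"
      using aK by (simp add: field_simps)
    then show ?thesis by linarith
  qed
qed

lemma swap3:
  fixes c :: "nat \<Rightarrow> nat \<Rightarrow> nat \<Rightarrow> real"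
  shows "(\<Sum>k\<le>D. (\<Sum>i\<le>D. \<Sum>j\<le>D. c i j k * R ^ i * I ^ j) * T ^ k) =
         (\<Sum>i\<le>D. \<Sum>j\<le>D. \<Sum>k\<le>D. c i j k * (R ^ i * I ^ j * T ^ k))"
proof -
  have "(\<Sum>k\<le>D. (\<Sum>i\<le>D. \<Sum>j\<le>D. c i j k * R ^ i * I ^ j) * T ^ k) =
        (\<Sum>k\<le>D. \<Sum>i\<le>D. \<Sum>j\<le>D. c i j k * (R ^ i * I ^ j * T ^ k))"
    by (simp add: sum_distrib_right mult.assoc)
  also have "\<dots> = (\<Sum>i\<le>D. \<Sum>k\<le>D. \<Sum>j\<le>D. c i j k * (R ^ i * I ^ j * T ^ k))"
    by (rule sum.swap)
  also have "\<dots> = (\<Sum>i\<le>D. \<Sum>j\<le>D. \<Sum>k\<le>D. c i j k * (R ^ i * I ^ j * T ^ k))"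
    by (rule sum.cong[OF refl], rule sum.swap)
  finally show ?thesis .
qed

lemma escape:
  fixes F :: "complex \<Rightarrow> complex" and t :: "complex \<Rightarrow> real" and c :: "nat \<Rightarrow> nat \<Rightarrow> nat \<Rightarrow> real"
  assumes nz: "\<exists>i\<le>D. \<exists>j\<le>D. \<exists>k\<le>D. c i j k \<noteq> 0"
    and rel: "\<forall>z. (\<Sum>i\<le>D. \<Sum>j\<le>D. \<Sum>k\<le>D. c i j k * (Re (F z) ^ i * Im (F z) ^ j * t z ^ k)) = 0"
  shows "\<exists>e. (\<exists>i\<le>D. \<exists>j\<le>D. e i j \<noteq> 0) \<and>
    (\<forall>w zs. (\<Sum>i\<le>D. \<Sum>j\<le>D. e i j * Re w ^ i * Im w ^ j) \<noteq> 0 \<longrightarrow> (\<lambda>n. F (zs n)) \<longlonglongrightarrow> w \<longrightarrow>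
       (\<exists>B. eventually (\<lambda>n. \<bar>t (zs n)\<bar> \<le> B) sequentially))"
proof -
  define Ks where "Ks = {k. k \<le> D \<and> (\<exists>i\<le>D. \<exists>j\<le>D. c i j k \<noteq> 0)}"
  define K where "K = Max Ks"
  have fin: "finite Ks" by (simp add: Ks_def)
  have ne: "Ks \<noteq> {}" using nz by (auto simp: Ks_def)
  have KKs: "K \<in> Ks" using Max_in[OF fin ne] by (simp add: K_def)
  then have KD: "K \<le> D" and Knz: "\<exists>i\<le>D. \<exists>j\<le>D. c i j K \<noteq> 0" by (auto simp: Ks_def)
  have above: "c i j k = 0" if "K < k" "k \<le> D" "i \<le> D" "j \<le> D" for i j k
  proof (rule ccontr)
    assume "c i j k \<noteq> 0"
    then have "k \<in> Ks" using that by (auto simp: Ks_def)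
    then have "k \<le> K" using Max_ge[OF fin] by (simp add: K_def)
    then show False using that by simp
  qed
  define A where "A = (\<lambda>k w. \<Sum>i\<le>D. \<Sum>j\<le>D. c i j k * Re w ^ i * Im w ^ j)"
  have rel2: "(\<Sum>k\<le>K. A k (F z) * t z ^ k) = 0" for z
  proof -
    have "(\<Sum>k\<le>K. A k (F z) * t z ^ k) = (\<Sum>k\<le>D. A k (F z) * t z ^ k)"
    proof (rule sum.mono_neutral_left)
      show "\<forall>k\<in>{..D} - {..K}. A k (F z) * t z ^ k = 0"
        using above by (auto simp: A_def)
    qed (use KD in auto)
    also have "\<dots> = 0" unfolding A_def swap3 using rel by blast
    finally show ?thesis .
  qed
  have contA: "isCont (A k) w" for k w
    unfolding A_def by (intro continuous_intros linear_continuous_at bounded_linear_Re bounded_linear_Im)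
  show ?thesis
  proof (rule exI[of _ "\<lambda>i j. c i j K"], intro conjI allI impI)
    show "\<exists>i\<le>D. \<exists>j\<le>D. c i j K \<noteq> 0" by (rule Knz)
  next
    fix w and zs :: "nat \<Rightarrow> complex"
    assume AK: "(\<Sum>i\<le>D. \<Sum>j\<le>D. c i j K * Re w ^ i * Im w ^ j) \<noteq> 0"
      and lim: "(\<lambda>n. F (zs n)) \<longlonglongrightarrow> w"
    have AKw: "A K w \<noteq> 0" using AK by (simp add: A_def)
    have limA: "(\<lambda>n. A k (F (zs n))) \<longlonglongrightarrow> A k w" for k
      using isCont_tendsto_compose[OF contA lim] .
    define \<beta> where "\<beta> = (\<lambda>\<zeta>. 1 + (\<Sum>k<K. \<bar>A k \<zeta>\<bar>) / \<bar>A K \<zeta>\<bar>)"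
    have "(\<lambda>n. \<beta> (F (zs n))) \<longlonglongrightarrow> \<beta> w"
      unfolding \<beta>_def using AKw by (intro tendsto_intros limA) auto
    then have ev1: "eventually (\<lambda>n. \<beta> (F (zs n)) < \<beta> w + 1) sequentially"
      by (rule order_tendstoD) simp
    have ev2: "eventually (\<lambda>n. A K (F (zs n)) \<noteq> 0) sequentially"
      using tendsto_imp_eventually_ne[OF limA AKw] .
    have "eventually (\<lambda>n. \<bar>t (zs n)\<bar> \<le> \<beta> w + 1) sequentially"
      using ev1 ev2
    proof eventually_elim
      case (elim n)
      have "\<bar>t (zs n)\<bar> \<le> \<beta> (F (zs n))"
        unfolding \<beta>_def by (rule cauchy_bound[OF rel2 elim(2)])
      then show ?case using elim(1) by simp
    qed
    then show "\<exists>B. eventually (\<lambda>n. \<bar>t (zs n)\<bar> \<le> B) sequentially" by blast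
  qed
qed

theorem corollary5p11:
  fixes p q :: "complex poly" and f :: "complex \<Rightarrow> complex"
  assumes "\<And>z. f z = poly p z + cnj (poly q z)"
  shows "interior (f ` crit_set f \<union> cluster_set_inf f) = {}"
proof -
  note f = assms
  obtain Rp Ip where p: "bnd (degree p) Rp" "bnd (degree p) Ip"
    "\<And>z. ev Rp z = Re (poly p z)" "\<And>z. ev Ip z = Im (poly p z)"
    using lift_cpoly[of p] by blast
  obtain Rq Iq where q: "bnd (degree q) Rq" "bnd (degree q) Iq"
    "\<And>z. ev Rq z = Re (poly q z)" "\<And>z. ev Iq z = Im (poly q z)"
    using lift_cpoly[of q] by blast
  define n where "n = max (degree p) (degree q)"
  define PU where "PU = Rp + Rq"
  define PV where "PV = Ip - Iq"
  have bU: "bnd n PU" unfolding PU_def n_def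
    by (intro bnd_add bnd_mono[OF p(1)] bnd_mono[OF q(1)]) auto
  have bV: "bnd n PV" unfolding PV_def n_def
    by (intro bnd_diff bnd_mono[OF p(2)] bnd_mono[OF q(2)]) auto
  have evU: "ev PU z = Re (f z)" for z unfolding PU_def using p q f by simp
  have evV: "ev PV z = Im (f z)" for z unfolding PV_def using p q f by simp
  obtain Dx cx where cx: "\<exists>i\<le>Dx. \<exists>j\<le>Dx. \<exists>k\<le>Dx. cx i j k \<noteq> 0"
    "\<forall>z. (\<Sum>i\<le>Dx. \<Sum>j\<le>Dx. \<Sum>k\<le>Dx. cx i j k * (Re (f z) ^ i * Im (f z) ^ j * Re z ^ k)) = 0"
    using dependency[OF bU bV bnd_PX] unfolding evU evV ev_simps by blast
  obtain Dy cy where cy: "\<exists>i\<le>Dy. \<exists>j\<le>Dy. \<exists>k\<le>Dy. cy i j k \<noteq> 0"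
    "\<forall>z. (\<Sum>i\<le>Dy. \<Sum>j\<le>Dy. \<Sum>k\<le>Dy. cy i j k * (Re (f z) ^ i * Im (f z) ^ j * Im z ^ k)) = 0"
    using dependency[OF bU bV bnd_PY] unfolding evU evV ev_simps by blast
  obtain ex where ex: "\<exists>i\<le>Dx. \<exists>j\<le>Dx. ex i j \<noteq> 0"
    "\<And>w zs. (\<Sum>i\<le>Dx. \<Sum>j\<le>Dx. ex i j * Re w ^ i * Im w ^ j) \<noteq> 0 \<Longrightarrow> (\<lambda>n. f (zs n)) \<longlonglongrightarrow> w \<Longrightarrow>
       (\<exists>B. eventually (\<lambda>n. \<bar>Re (zs n)\<bar> \<le> B) sequentially)"
    using escape[OF cx] by blast
  obtain ey where ey: "\<exists>i\<le>Dy. \<exists>j\<le>Dy. ey i j \<noteq> 0"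
    "\<And>w zs. (\<Sum>i\<le>Dy. \<Sum>j\<le>Dy. ey i j * Re w ^ i * Im w ^ j) \<noteq> 0 \<Longrightarrow> (\<lambda>n. f (zs n)) \<longlonglongrightarrow> w \<Longrightarrow>
       (\<exists>B. eventually (\<lambda>n. \<bar>Im (zs n)\<bar> \<le> B) sequentially)"
    using escape[OF cy] by blast
  define Ex where "Ex = (\<lambda>w. \<Sum>i\<le>Dx. \<Sum>j\<le>Dx. ex i j * Re w ^ i * Im w ^ j)"
  define Ey where "Ey = (\<lambda>w. \<Sum>i\<le>Dy. \<Sum>j\<le>Dy. ey i j * Re w ^ i * Im w ^ j)"
  have Csub: "Ex w \<noteq> 0 \<Longrightarrow> Ey w \<noteq> 0 \<Longrightarrow> w \<notin> cluster_set_inf f" for w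
  proof
    assume nx: "Ex w \<noteq> 0" and ny: "Ey w \<noteq> 0" and w: "w \<in> cluster_set_inf f"
    then obtain zs where zs: "filterlim (\<lambda>n. norm (zs n)) at_top sequentially"
      "(\<lambda>n. f (zs n)) \<longlonglongrightarrow> w" by (auto simp: cluster_set_inf_def)
    obtain Bx where Bx: "eventually (\<lambda>n. \<bar>Re (zs n)\<bar> \<le> Bx) sequentially"
      using ex(2)[OF nx[unfolded Ex_def] zs(2)] by blast
    obtain By where By: "eventually (\<lambda>n. \<bar>Im (zs n)\<bar> \<le> By) sequentially"
      using ey(2)[OF ny[unfolded Ey_def] zs(2)] by blast
    have big: "eventually (\<lambda>n. Bx + By + 1 \<le> norm (zs n)) sequentially"
      using zs(1) by (simp add: filterlim_at_top)
    have "eventually (\<lambda>n. False) sequentially"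
      using Bx By big
    proof eventually_elim
      case (elim n)
      then show ?case using cmod_le[of "zs n"] by linarith
    qed
    then show False by simp
  qed
  have contEx: "continuous_on UNIV Ex" unfolding Ex_def
    by (intro continuous_intros linear_continuous_on bounded_linear_Re bounded_linear_Im)
  have contEy: "continuous_on UNIV Ey" unfolding Ey_def
    by (intro continuous_intros linear_continuous_on bounded_linear_Re bounded_linear_Im)
  have neg: "negligible (f ` crit_set f)" by (rule crit_negligible[OF f])
  show ?thesis
  proof (rule ccontr)
    assume "interior (f ` crit_set f \<union> cluster_set_inf f) \<noteq> {}"
    then obtain w0 where "w0 \<in> interior (f ` crit_set f \<union> cluster_set_inf f)" by blast
    then obtain r where r: "r > 0" "ball w0 r \<subseteq> f ` crit_set f \<union> cluster_set_inf f"
      by (auto simp: mem_interior)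
    obtain w1 where w1: "w1 \<in> ball w0 r" "Ex w1 \<noteq> 0"
      using two_var_zero[OF r(1), where ctr=w0 and D=Dx and c=ex] ex(1) unfolding Ex_def by blast
    define O1 where "O1 = ball w0 r \<inter> {w. Ex w \<noteq> 0}"
    have oO1: "open O1" unfolding O1_def
      by (intro open_Int open_ball open_Collect_neq contEx continuous_on_const)
    obtain r1 where r1: "r1 > 0" "ball w1 r1 \<subseteq> O1"
    proof -
      have "w1 \<in> O1" using w1 by (simp add: O1_def)
      then show ?thesis using oO1 that open_contains_ball by blast
    qed
    obtain w2 where w2: "w2 \<in> ball w1 r1" "Ey w2 \<noteq> 0"
      using two_var_zero[OF r1(1), where ctr=w1 and D=Dy and c=ey] ey(1) unfolding Ey_def by blast
    define O2 where "O2 = O1 \<inter> {w. Ey w \<noteq> 0}"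
    have oO2: "open O2" unfolding O2_def
      by (intro open_Int oO1 open_Collect_neq contEy continuous_on_const)
    have "w2 \<in> O2" using w2 r1 by (auto simp: O2_def)
    moreover have "O2 \<subseteq> f ` crit_set f"
      using r Csub by (auto simp: O2_def O1_def)
    ultimately have "negligible O2" "\<not> negligible O2"
      using negligible_subset[OF neg] open_not_negligible[OF oO2] by blast+
    then show False by blast
  qed
qed

end
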